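(* For each integer $t\geq 1$ let $a_t\geq 1$ be an integer, and let $$f_t(X)=X^3+a_t^2(a_t^3-2)X^2-a_t(a_t^3-1)X+1+tX(a_tX-1).$$ Let $\theta_t^{(1)}<\theta_t^{(2)}$ denote the two positive real roots of $f_t(X)$. Fix a real number $0<\alpha<1/4$ and suppose $a_t\leq t^{\alpha}$ for all $t\geq 1$. Then for every positive integer $k\leq 1/\alpha-3$ there is $A'=A'(\alpha,k)>0$ such that $$|\theta_t^{(1)}|\leq a_t^{-k}\quad\text{and}\quad |\theta_t^{(2)}-a_t^{-1}|\leq a_t^{-k}$$ for all $t$ with $a_t\geq A'$.
   Context: For integers $t\geq 1$ and $a_t\geq 1$, the polynomial $f_t(X)$ has only real roots, exactly two of which are positive (the third is negative); $\theta_t^{(1)}<\theta_t^{(2)}$ denote these two positive roots. *)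

theory Defs
  imports Complex_Main
begin

definition f_poly :: "int \<Rightarrow> nat \<Rightarrow> real \<Rightarrow> real" where
  "f_poly a t x = x ^ 3 + (real_of_int a) ^ 2 * ((real_of_int a) ^ 3 - 2) * x ^ 2
     - real_of_int a * ((real_of_int a) ^ 3 - 1) * x + 1
     + real t * x * (real_of_int a * x - 1)"

text \<open>The two positive roots theta^(1) < theta^(2) (the context guarantees exactly two).\<close>
definition theta1 :: "int \<Rightarrow> nat \<Rightarrow> real" where
  "theta1 a t = Min {x. x > 0 \<and> f_poly a t x = 0}"

definition theta2 :: "int \<Rightarrow> nat \<Rightarrow> real" where
  "theta2 a t = Max {x. x > 0 \<and> f_poly a t x = 0}"

end

theory Submission imports Defs "HOL-Computational_Algebra.Polynomial" begin

lemma f_u: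
  assumes "real_of_int a \<noteq> 0"
  shows "f_poly a t x = (real_of_int a*x)^3/(real_of_int a)^3 + (real_of_int a*x - 1)*(((real_of_int a)^3 - 2 + real t/real_of_int a)*(real_of_int a*x) - 1)"
  using assms unfolding f_poly_def by (simp add: field_simps power3_eq_cube power2_eq_square)

lemma f_finite: "finite {x. x > 0 \<and> f_poly a t x = 0}"
proof -
  let ?p = "[:1, - (real_of_int a * ((real_of_int a)^3 - 1)) - real t,
     (real_of_int a)^2 * ((real_of_int a)^3 - 2) + real t * real_of_int a, 1:]"
  have "?p \<noteq> 0" by simp
  hence fin: "finite {x. poly ?p x = 0}" by (rule poly_roots_finite)
  have eq: "f_poly a t x = poly ?p x" for x
    unfolding f_poly_def by (simp add: algebra_simps power3_eq_cube power2_eq_square)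
  show ?thesis by (rule finite_subset[OF _ fin]) (auto simp only: eq)
qed

lemma F_lt1:
  fixes A M u :: real
  assumes "A > 0" "M \<ge> 1" "u > 0" "u^3/A^3 + (u-1)*(M*u-1) = 0"
  shows "u < 1"
proof (rule ccontr)
  assume "\<not> u < 1"
  hence "(u-1)*(M*u-1) \<ge> 0" using assms by (intro mult_nonneg_nonneg) (auto intro: order_trans[of 1 M "M*u"] simp: mult_le_cancel_left1)
  moreover have "u^3/A^3 > 0" using assms by simp
  ultimately show False using assms(4) by linarith
qed

lemma F_small:
  fixes A M u :: real
  assumes "A \<ge> 1" "M \<ge> 1" "u > 0" "u \<le> 1/2" "u^3/A^3 + (u-1)*(M*u-1) = 0"
  shows "u \<le> 3/M"
proof -
  have "u^3 \<le> 1" using assms by (simp add: power_le_one)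
  hence "u^3/A^3 \<le> 1" using assms by (simp add: divide_le_eq_1 order_trans[OF _ one_le_power])
  hence "(1-u)*(M*u-1) \<le> 1" using assms(5) by (simp add: algebra_simps)
  hence "M*u - 1 \<le> 2"
  proof -
    assume h: "(1-u)*(M*u-1) \<le> 1"
    show ?thesis
    proof (rule ccontr)
      assume "\<not> M*u-1 \<le> 2"
      hence "(1-u)*(M*u-1) \<ge> (1/2)*(M*u-1)" using assms by (intro mult_right_mono) auto
      hence "(1/2)*(M*u-1) \<le> 1" using h by linarith
      hence "M*u-1 \<le> 2" by simp
      thus False using \<open>\<not> M*u-1 \<le> 2\<close> by linarith
    qed
  qed
  thus ?thesis using assms by (simp add: field_simps)
qed

lemma F_big:
  fixes A M u :: real
  assumes "A \<ge> 1" "M \<ge> 4" "u \<ge> 1/2" "u < 1" "u^3/A^3 + (u-1)*(M*u-1) = 0"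
  shows "1 - u \<le> 4/(A^3*M)"
proof -
  have "u^3 \<le> 1" using assms by (simp add: power_le_one)
  hence "u^3/A^3 \<le> 1/A^3" using assms by (simp add: divide_right_mono)
  hence h: "(1-u)*(M*u-1) \<le> 1/A^3" using assms(5) by (simp add: algebra_simps)
  have "M*u - 1 \<ge> M/4"
  proof -
    have "M*u \<ge> M/2" using assms mult_left_mono[of "1/2" u M] by simp
    thus ?thesis using assms by linarith
  qed
  hence "(1-u)*(M/4) \<le> (1-u)*(M*u-1)" using assms by (intro mult_left_mono) auto
  hence "(1-u)*(M/4) \<le> 1/A^3" using h by linarith
  thus ?thesis using assms by (simp add: field_simps)
qed

lemma f_cont: "isCont (f_poly a t) x"
  unfolding f_poly_def by (intro continuous_intros)

lemma pow_bound:
  fixes A T :: real and k :: nat and \<alpha> :: real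
  assumes "A \<ge> 1" "0 < \<alpha>" "real k \<le> 1/\<alpha> - 3" "A \<le> T powr \<alpha>" "T \<ge> 1"
  shows "A^(k+3) \<le> T"
proof -
  have "A^(k+3) = A powr (real (k+3))" using assms by (intro powr_realpow[symmetric]) auto
  also have "\<dots> \<le> A powr (1/\<alpha>)" using assms by (intro powr_mono) auto
  also have "\<dots> \<le> (T powr \<alpha>) powr (1/\<alpha>)" using assms by (intro powr_mono2) auto
  also have "\<dots> = T" using assms by (simp add: powr_powr)
  finally show ?thesis .
qed

theorem mainTheorem3:
  fixes a :: "nat \<Rightarrow> int" and \<alpha> :: real
  assumes a_ge1: "\<And>t. t \<ge> 1 \<Longrightarrow> a t \<ge> 1"
    and alpha_pos: "0 < \<alpha>" and alpha_lt: "\<alpha> < 1/4"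
    and a_bound: "\<And>t. t \<ge> 1 \<Longrightarrow> real_of_int (a t) \<le> (real t) powr \<alpha>"
  shows "\<forall>k::nat. 1 \<le> k \<and> real k \<le> 1/\<alpha> - 3 \<longrightarrow>
           (\<exists>A'::real. A' > 0 \<and>
              (\<forall>t::nat. t \<ge> 1 \<and> real_of_int (a t) \<ge> A' \<longrightarrow>
                 \<bar>theta1 (a t) t\<bar> \<le> 1 / (real_of_int (a t)) ^ k \<and>
                 \<bar>theta2 (a t) t - 1 / real_of_int (a t)\<bar> \<le> 1 / (real_of_int (a t)) ^ k))"
proof (intro allI impI)
  fix k :: nat
  assume k: "1 \<le> k \<and> real k \<le> 1/\<alpha> - 3"
  show "\<exists>A'::real. A' > 0 \<and>
              (\<forall>t::nat. t \<ge> 1 \<and> real_of_int (a t) \<ge> A' \<longrightarrow>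
                 \<bar>theta1 (a t) t\<bar> \<le> 1 / (real_of_int (a t)) ^ k \<and>
                 \<bar>theta2 (a t) t - 1 / real_of_int (a t)\<bar> \<le> 1 / (real_of_int (a t)) ^ k)"
  proof (intro exI[of _ 4] conjI allI impI)
    fix t :: nat
    assume t: "t \<ge> 1 \<and> real_of_int (a t) \<ge> 4"
    define A where "A = real_of_int (a t)"
    define T where "T = real t"
    define M where "M = A^3 - 2 + T/A"
    define S where "S = {x. x > 0 \<and> f_poly (a t) t x = 0}"
    define G where "G = (\<lambda>u::real. u^3/A^3 + (u-1)*(M*u-1))"
    have A4: "A \<ge> 4" using t A_def by simp
    have T1: "T \<ge> 1" using t T_def by simp
    have TA: "A^(k+3) \<le> T"
      using pow_bound[of A \<alpha> k T] A4 alpha_pos k a_bound[of t] t A_def T_def by simp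
    have A3: "A^3 \<ge> 64"
    proof -
      have "(4::real)^3 \<le> A^3" using A4 by (intro power_mono) auto
      thus ?thesis by simp
    qed
    have A6: "A^6 \<ge> 4"
    proof -
      have "(4::real)^6 \<le> A^6" using A4 by (intro power_mono) auto
      thus ?thesis by simp
    qed
    have "T/A \<ge> 0" using T1 A4 by simp
    hence M6: "M \<ge> 6" using A3 M_def by linarith
    hence M4: "M \<ge> 4" by simp
    have AM: "A*M \<ge> T"
    proof -
      have "A*M = A*A^3 - 2*A + T" using A4 unfolding M_def by (simp add: field_simps)
      moreover have "A*A^3 \<ge> 2*A" using A3 A4 by (simp add: mult_left_mono[of 2 "A^3" A])
      ultimately show ?thesis by linarith
    qed
    have fG: "f_poly (a t) t x = G (A*x)" for x
      unfolding G_def M_def A_def T_def using A4 A_def by (subst f_u) auto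
    have fin: "finite S" unfolding S_def by (rule f_finite)
    have lt: "x < 1/A" if "x \<in> S" for x
    proof -
      have "A*x > 0" "G (A*x) = 0" using that A4 fG unfolding S_def by auto
      hence "A*x < 1" using F_lt1[of A M "A*x"] A4 M4 unfolding G_def by auto
      thus ?thesis using A4 by (simp add: field_simps)
    qed
    have Ghalf: "G (1/2) \<le> 0"
    proof -
      have "(1/2::real)^3/A^3 \<le> 1" using A3 A4 by (simp add: divide_le_eq)
      moreover have "((1/2::real)-1)*(M*(1/2)-1) \<le> -1" using M6 by (simp add: algebra_simps)
      ultimately show ?thesis unfolding G_def by linarith
    qed
    have f0: "f_poly (a t) t 0 = 1" unfolding f_poly_def by simp
    have fhalf: "f_poly (a t) t (1/(2*A)) \<le> 0" using fG[of "1/(2*A)"] Ghalf A4 by simp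
    have fone: "f_poly (a t) t (1/A) \<ge> 0" using fG[of "1/A"] A4 unfolding G_def by simp
    obtain x1 where x1: "0 \<le> x1" "x1 \<le> 1/(2*A)" "f_poly (a t) t x1 = 0"
      using IVT2[of "f_poly (a t) t" "1/(2*A)" 0 0] fhalf f0 A4 f_cont by auto
    have x1pos: "x1 > 0" using x1 f0 by (cases "x1 = 0") auto
    have x1S: "x1 \<in> S" using x1 x1pos S_def by auto
    have x1b: "x1 \<le> 1/A^k"
    proof -
      have "A*x1 \<le> 1/2" using x1 A4 by (simp add: field_simps)
      hence "A*x1 \<le> 3/M" using F_small[of A M "A*x1"] A4 M4 x1pos x1 fG[of x1] unfolding G_def by auto
      hence "x1 \<le> 3/(A*M)" using A4 M4 by (simp add: field_simps)
      also have "\<dots> \<le> 3/T" using AM T1 by (intro divide_left_mono) auto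
      also have "\<dots> \<le> 3/A^(k+3)" using TA A4 T1 by (intro divide_left_mono) auto
      also have "\<dots> \<le> 1/A^k" using A3 A4 by (simp add: field_simps power_add)
      finally show ?thesis .
    qed
    have "1/(2*A) \<le> 1/A" using A4 by (simp add: field_simps)
    then obtain x2 where x2: "1/(2*A) \<le> x2" "x2 \<le> 1/A" "f_poly (a t) t x2 = 0"
      using IVT[of "f_poly (a t) t" "1/(2*A)" 0 "1/A"] fhalf fone A4 f_cont by auto
    have x2pos: "x2 > 0" using x2(1) A4 by (smt (verit) divide_pos_pos)
    have x2S: "x2 \<in> S" using x2 x2pos S_def by auto
    have x2b: "1/A - x2 \<le> 1/A^k"
    proof -
      have h1: "A*x2 \<ge> 1/2" using x2 A4 by (simp add: field_simps)
      have h2: "A*x2 < 1" using lt[OF x2S] A4 by (simp add: field_simps)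
      have "1 - A*x2 \<le> 4/(A^3*M)" using F_big[of A M "A*x2"] A4 M4 h1 h2 x2 fG[of x2] unfolding G_def by auto
      hence "(1 - A*x2)/A \<le> (4/(A^3*M))/A" using A4 by (intro divide_right_mono) auto
      moreover have "(1 - A*x2)/A = 1/A - x2" using A4 by (simp add: field_simps)
      moreover have "(4/(A^3*M))/A = 4/(A^3*(A*M))" by (simp add: field_simps)
      ultimately have "1/A - x2 \<le> 4/(A^3*(A*M))" by (simp only:)
      also have "\<dots> \<le> 4/(A^3*T)" using AM T1 A3 A4 M4 by (intro divide_left_mono mult_left_mono mult_pos_pos) auto
      also have "\<dots> \<le> 4/(A^3*A^(k+3))" using TA A3 A4 T1 by (intro divide_left_mono mult_left_mono) auto
      also have "\<dots> \<le> 1/A^k" using A3 A4 A6 by (simp add: field_simps power_add)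
      finally show ?thesis .
    qed
    have ne: "S \<noteq> {}" using x1S by auto
    have minS: "Min S \<in> S" "Min S \<le> x1" using fin ne x1S by auto
    have maxS: "Max S \<in> S" "Max S \<ge> x2" using fin ne x2S by auto
    have th1: "theta1 (a t) t = Min S" unfolding theta1_def S_def by simp
    have th2: "theta2 (a t) t = Max S" unfolding theta2_def S_def by simp
    show "\<bar>theta1 (a t) t\<bar> \<le> 1 / (real_of_int (a t)) ^ k"
      using minS x1b th1 S_def A_def by auto
    show "\<bar>theta2 (a t) t - 1 / real_of_int (a t)\<bar> \<le> 1 / (real_of_int (a t)) ^ k"
      using maxS x2b th2 lt[OF maxS(1)] A_def by auto
  qed simp
qed

end
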